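(* Let $p>0$, $\lambda>0$, and let $u=u(r)$, $r=|x|$, be a radial solution with $0<u<1$ of \[ \Delta u+\frac{\lambda}{(1-u)^p}=0 \ \text{ in } |x|<1\subset\mathbb{R}^n,\qquad u=0 \text{ on } |x|=1. \] Suppose $u$ is singular, i.e. the problem \[ \omega''+\frac{n-1}{r}\omega'+\lambda\frac{p}{(1-u)^{p+1}}\omega=0\quad(0<r<1),\qquad \omega'(0)=\omega(1)=0 \] has a nontrivial solution. Then \[ \omega(r)=ru'(r)-\frac{2}{p+1}u(r)+\frac{2}{p+1} \] is a solution of this problem. *)

theory Defs
  imports Complex_Main
begin

definition radial_solution :: "nat \<Rightarrow> real \<Rightarrow> real \<Rightarrow> (real \<Rightarrow> real) \<Rightarrow> (real \<Rightarrow> real) \<Rightarrow> (real \<Rightarrow> real) \<Rightarrow> bool" where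
  "radial_solution n lam p u du d2u \<longleftrightarrow>
     (\<forall>r\<in>{0..1}. (u has_real_derivative du r) (at r within {0..1})) \<and>
     (\<forall>r\<in>{0..1}. (du has_real_derivative d2u r) (at r within {0..1})) \<and>
     (\<forall>r\<in>{0<..<1}. d2u r + (real n - 1) / r * du r + lam / (1 - u r) powr p = 0) \<and>
     du 0 = 0 \<and> u 1 = 0 \<and>
     (\<forall>r\<in>{0..<1}. 0 < u r \<and> u r < 1)"

definition linearized_solution :: "nat \<Rightarrow> real \<Rightarrow> real \<Rightarrow> (real \<Rightarrow> real) \<Rightarrow> (real \<Rightarrow> real) \<Rightarrow> bool" where
  "linearized_solution n lam p u w \<longleftrightarrow>
     (\<exists>dw. (\<forall>r\<in>{0..1}. (w has_real_derivative dw r) (at r within {0..1})) \<and>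
           (\<forall>r\<in>{0<..<1}. \<exists>d2w. (dw has_real_derivative d2w) (at r) \<and>
               d2w + (real n - 1) / r * dw r + lam * p / (1 - u r) powr (p + 1) * w r = 0) \<and>
           dw 0 = 0 \<and> w 1 = 0)"

end

theory Submission
  imports Defs
begin

lemma alg: fixes r N a lam p H y G D :: real assumes "r \<noteq> 0" "a*(p+1) = 2" "H*y = G"
 shows "(2-N-a)*(-(N-1)/r*D - lam*G) - lam*G - lam*r*(p*H*D) + (N-1)/r*((2-N-a)*D - lam*r*G) + lam*p*H*(r*D - a*(1-y) + a) = 0"
proof -
  have "(2-N-a)*(-(N-1)/r*D - lam*G) - lam*G - lam*r*(p*H*D) + (N-1)/r*((2-N-a)*D - lam*r*G) + lam*p*H*(r*D - a*(1-y) + a) = lam*a*p*(H*y-G) + lam*G*(a*(p+1)-2)"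
    using assms(1) by (simp add: field_simps)
  then show ?thesis using assms by simp
qed

theorem lemma5p2:
  fixes n :: nat and lam p :: real and u du d2u :: "real \<Rightarrow> real"
  assumes "n \<ge> 1" and "p > 0" and "lam > 0"
    and "radial_solution n lam p u du d2u"
    and "\<exists>\<omega>. linearized_solution n lam p u \<omega> \<and> (\<exists>r\<in>{0..1}. \<omega> r \<noteq> 0)"
  shows "linearized_solution n lam p u (\<lambda>r. r * du r - 2 / (p + 1) * u r + 2 / (p + 1))"
proof -
  define a where "a = 2/(p+1)"
  have a_eq: "a*(p+1) = 2" using assms(2) by (simp add: a_def field_simps)
  have apos: "a > 0" using assms(2) by (simp add: a_def)
  from assms(4) have hu: "\<And>r. r\<in>{0..1} \<Longrightarrow> (u has_real_derivative du r) (at r within {0..1})"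
    and hdu: "\<And>r. r\<in>{0..1} \<Longrightarrow> (du has_real_derivative d2u r) (at r within {0..1})"
    and ode: "\<And>r. r\<in>{0<..<1} \<Longrightarrow> d2u r + (real n - 1) / r * du r + lam / (1 - u r) powr p = 0"
    and du0: "du 0 = 0" and u1: "u 1 = 0" and ub: "\<And>r. r\<in>{0..<1} \<Longrightarrow> 0 < u r \<and> u r < 1"
    unfolding radial_solution_def by auto
  define om where "om = (\<lambda>r. r * du r - a * u r + a)"
  define dom where "dom = (\<lambda>r. (1-a)*du r + r*d2u r)"
  define q where "q = (\<lambda>r. lam * p / (1 - u r) powr (p + 1))"
  define g where "g = (\<lambda>r. (1 - u r) powr (-p))"
  define H where "H = (\<lambda>r. (1 - u r) powr (-p-1))"
  define d2om where "d2om = (\<lambda>r. (2 - real n - a)*d2u r - lam * g r - lam * r * (p * H r * du r))"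
  have ult: "u r < 1" if "r \<in> {0..1}" for r
    using that ub[of r] u1 by (cases "r = 1") auto
  have om_der: "(om has_real_derivative dom r) (at r within {0..1})" if "r \<in> {0..1}" for r
    unfolding om_def dom_def
    by (rule derivative_eq_intros hu hdu that refl | simp add: algebra_simps)+
  have dom0: "dom 0 = 0" by (simp add: dom_def du0)
  have hu': "(u has_real_derivative du r) (at r)" if "r\<in>{0<..<1}" for r
    using hu[of r] that at_within_Icc_at[of 0 r 1] by auto
  have hdu': "(du has_real_derivative d2u r) (at r)" if "r\<in>{0<..<1}" for r
    using hdu[of r] that at_within_Icc_at[of 0 r 1] by auto
  have om_der': "(om has_real_derivative dom r) (at r)" if "r\<in>{0<..<1}" for r
    using om_der[of r] that at_within_Icc_at[of 0 r 1] by auto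
  have d2u_eq: "d2u r = -(real n - 1)/r * du r - lam * g r" if "r\<in>{0<..<1}" for r
    using ode[OF that] unfolding g_def by (simp add: powr_minus divide_inverse algebra_simps)
  have dom_eq: "dom r = (2 - real n - a) * du r - lam * r * g r" if "r\<in>{0<..<1}" for r
    using d2u_eq[OF that] that unfolding dom_def by (simp add: field_simps)
  have g_der: "(g has_real_derivative p * H r * du r) (at r)" if "r\<in>{0<..<1}" for r
  proof -
    have "((\<lambda>x. 1 - u x) has_real_derivative - du r) (at r)"
      by (rule derivative_eq_intros hu'[OF that] | simp)+
    from DERIV_fun_powr[OF this, of "-p"] that ult[of r]
    show ?thesis unfolding g_def H_def by (simp add: algebra_simps)
  qed
  have dom_der: "(dom has_real_derivative d2om r) (at r)" if "r\<in>{0<..<1}" for r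
  proof -
    have "((\<lambda>x. (2 - real n - a) * du x - lam * x * g x) has_real_derivative d2om r) (at r)"
      unfolding d2om_def
      by (auto intro!: derivative_eq_intros hdu'[OF that] g_der[OF that] simp: algebra_simps)
    then show ?thesis
      by (rule has_field_derivative_transform_within_open[of _ _ _ "{0<..<1}"]) (use that dom_eq in auto)
  qed
  have ode_om: "d2om r + (real n - 1)/r * dom r + q r * om r = 0" if "r\<in>{0<..<1}" for r
  proof -
    have y: "1 - u r > 0" using ult[of r] that by auto
    have qH: "q r = lam * p * H r" unfolding q_def H_def using y
      by (simp add: powr_minus divide_inverse algebra_simps flip: powr_minus) (rule disjI2, rule disjI2, rule arg_cong[where f="\<lambda>e. (1 - u r) powr e"], simp)
    have Hy: "H r * (1 - u r) = g r"
    proof -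
      have "(1 - u r) powr (- p - 1) * (1 - u r) = (1 - u r) powr (- p - 1) * (1 - u r) powr 1"
        using y by simp
      also have "\<dots> = (1 - u r) powr (-p)" by (subst powr_add[symmetric]) simp
      finally show ?thesis by (simp add: H_def g_def)
    qed
    show ?thesis
      using alg[where r=r and N="real n" and a=a and lam=lam and p=p and H="H r" and y="1 - u r" and G="g r" and D="du r", OF _ a_eq Hy] that
      unfolding d2om_def dom_eq[OF that] d2u_eq[OF that] qH om_def by (simp add: algebra_simps)
  qed
  have om1: "om 1 = 0"
  proof (rule ccontr)
    assume om1ne: "om 1 \<noteq> 0"
    from assms(5) obtain w0 r0 where lin: "linearized_solution n lam p u w0"
      and r0: "r0 \<in> {0..1}" "w0 r0 \<noteq> 0" by auto
    then obtain dw0 where hw0: "\<And>r. r\<in>{0..1} \<Longrightarrow> (w0 has_real_derivative dw0 r) (at r within {0..1})"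
      and odew: "\<And>r. r\<in>{0<..<1} \<Longrightarrow> \<exists>d2w. (dw0 has_real_derivative d2w) (at r) \<and>
               d2w + (real n - 1) / r * dw0 r + lam * p / (1 - u r) powr (p + 1) * w0 r = 0"
      and dw00: "dw0 0 = 0" and w01: "w0 1 = 0"
      unfolding linearized_solution_def by blast
    have hw0': "(w0 has_real_derivative dw0 r) (at r)" if "r\<in>{0<..<1}" for r
      using hw0[of r] that at_within_Icc_at[of 0 r 1] by auto
    define W where "W = (\<lambda>r. r^(n-1) * (om r * dw0 r - w0 r * dom r))"
    have powid: "real (n-1) * r^(n-1-1) = (real n - 1)/r * r^(n-1)" if "r > 0" for r :: real
    proof (cases "n = 1")
      case True then show ?thesis by simp
    next
      case False
      then obtain m where m: "n - 1 = Suc m" using assms(1) by (cases "n - 1") auto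
      then have "n = Suc (Suc m)" using assms(1) by simp
      then show ?thesis using that by (simp add: field_simps)
    qed
    have W_der: "(W has_real_derivative 0) (at r)" if r: "r\<in>{0<..<1}" for r
    proof -
      obtain d2w where d2w: "(dw0 has_real_derivative d2w) (at r)"
        and e: "d2w + (real n - 1) / r * dw0 r + q r * w0 r = 0"
        using odew[OF r] unfolding q_def by auto
      have "(W has_real_derivative real (n-1) * r^(n-1-1) * (om r * dw0 r - w0 r * dom r) + r^(n-1) * (dom r * dw0 r + om r * d2w - (dw0 r * dom r + w0 r * d2om r))) (at r)"
        unfolding W_def by (auto intro!: derivative_eq_intros om_der'[OF r] hw0'[OF r] dom_der[OF r] d2w)
      moreover have "real (n-1) * r^(n-1-1) * (om r * dw0 r - w0 r * dom r) + r^(n-1) * (dom r * dw0 r + om r * d2w - (dw0 r * dom r + w0 r * d2om r)) = 0"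
      proof -
        have d2w_eq: "d2w = -((real n - 1)/r * dw0 r) - q r * w0 r" using e by linarith
        have d2om_eq: "d2om r = -((real n - 1)/r * dom r) - q r * om r" using ode_om[OF r] by linarith
        have r0': "r > 0" using r by simp
        show ?thesis unfolding d2w_eq d2om_eq powid[OF r0'] using r by (simp add: field_simps)
      qed
      ultimately show ?thesis by simp
    qed
    have Wc: "W r = W (1/2)" if r: "r\<in>{0<..<1}" for r
    proof -
      have cont: "continuous_on {x..y} W" if "0<x" "y<1" for x y
      proof (rule continuous_at_imp_continuous_on, intro ballI)
        fix z assume "z \<in> {x..y}"
        then have "z \<in> {0<..<1}" using that by auto
        from DERIV_isCont[OF W_der[OF this]] show "isCont W z" .
      qed
      consider "r < 1/2" | "r = 1/2" | "r > 1/2" by linarith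
      then show ?thesis
      proof cases
        case 1 show ?thesis using DERIV_isconst2[of r "1/2" W "1/2"] cont[of r "1/2"] W_der r 1 by auto
      next
        case 2 then show ?thesis by (simp only:)
      next
        case 3 show ?thesis using DERIV_isconst2[of "1/2" r W r] cont[of "1/2" r] W_der r 3 by auto
      qed
    qed
    define c where "c = W (1/2)"
    have om0: "om 0 = a * (1 - u 0)" by (simp add: om_def algebra_simps)
    have om0pos: "om 0 > 0" unfolding om0 using ub[of 0] apos by simp
    have ctsR: "(f \<longlongrightarrow> f 0) (at_right 0)" if "\<And>r. r\<in>{0..1} \<Longrightarrow> (f has_real_derivative f' r) (at r within {0..1})" for f f'
      using DERIV_continuous[OF that[of 0]] at_within_Icc_at_right[of "0::real" 1] by (simp add: continuous_within)
    have ctsL: "(f \<longlongrightarrow> f 1) (at_left 1)" if "\<And>r. r\<in>{0..1} \<Longrightarrow> (f has_real_derivative f' r) (at r within {0..1})" for f f'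
      using DERIV_continuous[OF that[of 1]] at_within_Icc_at_left[of "0::real" 1] by (simp add: continuous_within)
    have ev01R: "eventually (\<lambda>x. x \<in> {0<..<1}) (at_right (0::real))"
      unfolding eventually_at_right_field by (rule exI[of _ 1]) auto
    have ev01L: "eventually (\<lambda>x. x \<in> {0<..<1}) (at_left (1::real))"
      unfolding eventually_at_left_field by (rule exI[of _ 0]) auto
    have domR: "(dom \<longlongrightarrow> 0) (at_right 0)"
    proof -
      have "((\<lambda>x. (2 - real n - a) * du x - lam * x * (1 - u x) powr (-p)) \<longlongrightarrow> (2 - real n - a) * du 0 - lam * 0 * (1 - u 0) powr (-p)) (at_right 0)"
        using ub[of 0] by (intro tendsto_intros ctsR[OF hu] ctsR[OF hdu]) auto
      then have "((\<lambda>x. (2 - real n - a) * du x - lam * x * g x) \<longlongrightarrow> 0) (at_right 0)"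
        by (simp add: du0 g_def)
      then show ?thesis
        by (rule Lim_transform_eventually) (use ev01R dom_eq in \<open>auto elim: eventually_mono\<close>)
    qed
    have domL: "(dom \<longlongrightarrow> (2 - real n - a) * du 1 - lam * 1 * (1 - u 1) powr (-p)) (at_left 1)"
    proof -
      have "((\<lambda>x. (2 - real n - a) * du x - lam * x * (1 - u x) powr (-p)) \<longlongrightarrow> (2 - real n - a) * du 1 - lam * 1 * (1 - u 1) powr (-p)) (at_left 1)"
        using u1 by (intro tendsto_intros ctsL[OF hu] ctsL[OF hdu]) auto
      then show ?thesis
        by (rule Lim_transform_eventually) (use ev01L dom_eq in \<open>auto simp: g_def elim: eventually_mono\<close>)
    qed
    have dqR: "((\<lambda>y. (w0 y - w0 0) / y) \<longlongrightarrow> 0) (at_right 0)"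
      using hw0[of 0] dw00 at_within_Icc_at_right[of "0::real" 1] by (simp add: has_field_derivative_iff)
    have c0: "c = 0"
    proof (rule ccontr)
      assume cne: "c \<noteq> 0"
      define B where "B = \<bar>w0 0\<bar> + 1"
      have Bpos: "B > 0" by (simp add: B_def)
      have e1: "eventually (\<lambda>x. \<bar>om x - om 0\<bar> < om 0 / 2) (at_right 0)"
        using tendstoD[OF ctsR[OF om_der], of "om 0/2"] om0pos by (simp add: dist_real_def)
      have e2: "eventually (\<lambda>x. \<bar>w0 x\<bar> < B) (at_right 0)"
        using tendstoD[OF ctsR[OF hw0], of 1] by (auto simp: B_def dist_real_def elim!: eventually_mono)
      have e3: "eventually (\<lambda>x. \<bar>dom x\<bar> < \<bar>c\<bar> / (2*B)) (at_right 0)"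
        using tendstoD[OF domR, of "\<bar>c\<bar>/(2*B)"] cne Bpos by (simp add: dist_real_def)
      have e4: "eventually (\<lambda>x. \<bar>(w0 x - w0 0)/x\<bar> < \<bar>c\<bar> / (4 * om 0)) (at_right 0)"
        using tendstoD[OF dqR, of "\<bar>c\<bar>/(4*om 0)"] cne om0pos by (simp add: dist_real_def)
      have "eventually (\<lambda>x. \<bar>om x - om 0\<bar> < om 0 / 2 \<and> \<bar>w0 x\<bar> < B \<and> \<bar>dom x\<bar> < \<bar>c\<bar> / (2*B) \<and> x \<in> {0<..<1}) (at_right 0)"
        using e1 e2 e3 ev01R by eventually_elim auto
      then obtain b1 where b1: "b1 > 0" and hb1: "\<And>y. 0 < y \<Longrightarrow> y < b1 \<Longrightarrow> \<bar>om y - om 0\<bar> < om 0 / 2 \<and> \<bar>w0 y\<bar> < B \<and> \<bar>dom y\<bar> < \<bar>c\<bar> / (2*B) \<and> y \<in> {0<..<1}"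
        unfolding eventually_at_right_field by auto
      from e4 obtain b2 where b2: "b2 > 0" and hb2: "\<And>y. 0 < y \<Longrightarrow> y < b2 \<Longrightarrow> \<bar>(w0 y - w0 0)/y\<bar> < \<bar>c\<bar> / (4 * om 0)"
        unfolding eventually_at_right_field by auto
      define r where "r = min b1 b2 / 2"
      have r: "0 < r" "r < b1" "r < b2" using b1 b2 by (auto simp: r_def)
      have r1: "r < 1" using hb1[OF r(1) r(2)] by simp
      have cw0: "continuous_on {0..1} w0"
        unfolding continuous_on_eq_continuous_within using hw0 DERIV_continuous by blast
      have "\<exists>l z. 0 < z \<and> z < r \<and> (w0 has_real_derivative l) (at z) \<and> w0 r - w0 0 = (r - 0) * l"
      proof (rule MVT)
        show "0 < r" by fact
        show "continuous_on {0..r} w0" using continuous_on_subset[OF cw0] r1 by auto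
        fix x :: real assume "0 < x" "x < r"
        then show "w0 differentiable at x" using hw0'[of x] r1 by (auto intro: derivative_intros simp: real_differentiable_def)
      qed
      then obtain l z where z: "0 < z" "z < r" and dz: "(w0 has_real_derivative l) (at z)"
        and mv: "w0 r - w0 0 = (r - 0) * l" by blast
      have zin: "z \<in> {0<..<1}" using z r1 by auto
      have l: "l = dw0 z" using DERIV_unique[OF dz hw0'[OF zin]] .
      have hz: "\<bar>om z - om 0\<bar> < om 0 / 2" "\<bar>w0 z\<bar> < B" "\<bar>dom z\<bar> < \<bar>c\<bar> / (2*B)"
        using hb1[of z] z r by auto
      have hd: "\<bar>dw0 z\<bar> < \<bar>c\<bar> / (4 * om 0)" using hb2[OF r(1) r(3)] mv l r(1) by simp
      have Wzc: "z^(n-1) * (om z * dw0 z - w0 z * dom z) = c" using Wc[OF zin] unfolding c_def W_def by simp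
      have zp: "0 < z^(n-1)" "z^(n-1) \<le> 1" using zin by (auto intro: power_le_one)
      have X: "\<bar>c\<bar> \<le> \<bar>om z * dw0 z - w0 z * dom z\<bar>"
      proof -
        have "\<bar>c\<bar> = z^(n-1) * \<bar>om z * dw0 z - w0 z * dom z\<bar>" using Wzc zp by (auto simp: abs_mult)
        also have "\<dots> \<le> 1 * \<bar>om z * dw0 z - w0 z * dom z\<bar>" by (rule mult_right_mono) (use zp in auto)
        finally show ?thesis by simp
      qed
      have Y: "\<bar>w0 z * dom z\<bar> \<le> \<bar>c\<bar>/2"
      proof -
        have "\<bar>w0 z * dom z\<bar> \<le> B * (\<bar>c\<bar> / (2*B))" unfolding abs_mult
          by (rule mult_mono) (use hz in auto)
        also have "\<dots> = \<bar>c\<bar>/2" using Bpos by simp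
        finally show ?thesis .
      qed
      have Z: "\<bar>om z * dw0 z\<bar> \<le> (3/2 * om 0) * (\<bar>c\<bar> / (4 * om 0))" unfolding abs_mult
        by (rule mult_mono) (use hz hd om0pos in \<open>auto simp: abs_if split: if_splits\<close>)
      have "(3/2 * om 0) * (\<bar>c\<bar> / (4 * om 0)) = 3/8 * \<bar>c\<bar>" using om0pos by simp
      then show False using X Y Z cne by linarith
    qed
    have Wz: "om r * dw0 r = w0 r * dom r" if r: "r\<in>{0<..<1}" for r
    proof -
      have "W r = 0" using Wc[OF r] c0 c_def by simp
      moreover have "r^(n-1) \<noteq> 0" using r by simp
      ultimately show ?thesis unfolding W_def using r by auto
    qed
    have EL: "((\<lambda>x. (w0 x)^2 + (dw0 x)^2) \<longlongrightarrow> 0) (at_left 1)"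
    proof -
      define D1 where "D1 = (2 - real n - a) * du 1 - lam * 1 * (1 - u 1) powr (-p)"
      have omL: "(om \<longlongrightarrow> om 1) (at_left 1)" by (rule ctsL[OF om_der])
      have w0L: "(w0 \<longlongrightarrow> 0) (at_left 1)" using ctsL[OF hw0] w01 by simp
      have evne: "eventually (\<lambda>x. om x \<noteq> 0) (at_left 1)" using tendsto_imp_eventually_ne[OF omL om1ne] .
      have "((\<lambda>x. w0 x * dom x / om x) \<longlongrightarrow> 0 * D1 / om 1) (at_left 1)"
        using om1ne by (intro tendsto_intros w0L omL domL[folded D1_def])
      then have lim1: "((\<lambda>x. w0 x * dom x / om x) \<longlongrightarrow> 0) (at_left 1)" by simp
      have dwL: "(dw0 \<longlongrightarrow> 0) (at_left 1)"
      proof (rule Lim_transform_eventually[OF lim1])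
        show "eventually (\<lambda>x. w0 x * dom x / om x = dw0 x) (at_left 1)"
          using evne ev01L by eventually_elim (use Wz in \<open>auto simp: field_simps\<close>)
      qed
      have "((\<lambda>x. (w0 x)^2 + (dw0 x)^2) \<longlongrightarrow> 0^2 + 0^2) (at_left 1)"
        by (intro tendsto_intros w0L dwL)
      then show ?thesis by simp
    qed
    have w0z: "w0 t = 0" if t: "t \<in> {0<..<1}" for t
    proof -
      have cu: "continuous_on {0..1} u"
        unfolding continuous_on_eq_continuous_within using hu DERIV_continuous by blast
      have cu': "continuous_on {t..1} u" using continuous_on_subset[OF cu] t by auto
      have cq: "continuous_on {t..1} q"
      proof -
        have ut: "\<forall>x\<in>{t..1}. u x < 1" using t ult by auto
        show ?thesis unfolding q_def using ut by (intro continuous_intros cu') auto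
      qed
      obtain xm where "xm \<in> {t..1}" and xm: "\<forall>y\<in>{t..1}. q y \<le> q xm"
        using continuous_attains_sup[OF compact_Icc _ cq] t by auto
      define Q where "Q = q xm"
      have q0: "q y \<ge> 0" for y unfolding q_def using assms(2,3) by simp
      define C where "C = 1 + Q + 2 * (real n - 1) / t"
      define EE where "EE = (\<lambda>x. (w0 x)^2 + (dw0 x)^2)"
      define F where "F = (\<lambda>x. EE x * exp (C * x))"
      have mono: "F t \<le> F s" if s: "t \<le> s" "s < 1" for s
      proof (rule DERIV_nonneg_imp_nondecreasing[OF s(1)])
        fix x assume x: "t \<le> x" "x \<le> s"
        then have xin: "x \<in> {0<..<1}" using t s by auto
        obtain d2w where d2w: "(dw0 has_real_derivative d2w) (at x)"
          and e: "d2w + (real n - 1) / x * dw0 x + q x * w0 x = 0"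
          using odew[OF xin] unfolding q_def by auto
        have der: "(F has_real_derivative (2 * w0 x * dw0 x + 2 * dw0 x * d2w + C * EE x) * exp (C * x)) (at x)"
          unfolding F_def EE_def by (auto intro!: derivative_eq_intros hw0'[OF xin] d2w simp: algebra_simps)
        have "0 \<le> 2 * w0 x * dw0 x + 2 * dw0 x * d2w + C * EE x"
        proof -
          define k where "k = (real n - 1) / x"
          have d2: "d2w = - (k * dw0 x) - q x * w0 x" using e unfolding k_def by linarith
          have n1: "real n - 1 \<ge> 0" using assms(1) by simp
          have k0: "0 \<le> k" using n1 xin unfolding k_def by simp
          have k1: "k \<le> (real n - 1)/t" unfolding k_def
            using n1 x t by (intro divide_left_mono) auto
          have qx: "0 \<le> q x" "q x \<le> Q" using q0 xm x s unfolding Q_def by auto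
          have i1: "2 * \<bar>w0 x * dw0 x\<bar> \<le> EE x"
          proof -
            have "0 \<le> (\<bar>w0 x\<bar> - \<bar>dw0 x\<bar>)^2" by simp
            then show ?thesis unfolding EE_def power2_eq_square by (simp add: abs_mult algebra_simps)
          qed
          have i2: "\<bar>2 * (1 - q x) * w0 x * dw0 x\<bar> \<le> (1 + Q) * EE x"
          proof -
            have "\<bar>2 * (1 - q x) * w0 x * dw0 x\<bar> = \<bar>1 - q x\<bar> * (2 * \<bar>w0 x * dw0 x\<bar>)" by (simp add: abs_mult) (simp add: abs_if)
            also have "\<dots> \<le> (1 + Q) * EE x" by (rule mult_mono) (use qx i1 in auto)
            finally show ?thesis .
          qed
          have i3: "2 * (k * (dw0 x)^2) \<le> 2 * ((real n - 1) / t * EE x)"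
          proof -
            have "k * (dw0 x)^2 \<le> (real n - 1) / t * EE x"
              by (rule mult_mono) (use k1 n1 t in \<open>auto simp: EE_def\<close>)
            then show ?thesis by simp
          qed
          have eq: "2 * w0 x * dw0 x + 2 * dw0 x * d2w + C * EE x = 2 * (1 - q x) * w0 x * dw0 x - 2 * (k * (dw0 x)^2) + ((1 + Q) * EE x + 2 * ((real n - 1) / t * EE x))"
            unfolding d2 C_def by (simp add: algebra_simps power2_eq_square)
          show ?thesis unfolding eq using i2 i3 by linarith
        qed
        then show "\<exists>y. (F has_real_derivative y) (at x) \<and> 0 \<le> y" using der by auto
      qed
      have FL: "(F \<longlongrightarrow> 0) (at_left 1)"
      proof -
        have "((\<lambda>x. EE x * exp (C*x)) \<longlongrightarrow> 0 * exp (C*1)) (at_left 1)"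
          using EL unfolding EE_def[symmetric] by (intro tendsto_intros)
        then show ?thesis unfolding F_def by simp
      qed
      have evm: "eventually (\<lambda>s. F t \<le> F s) (at_left 1)"
        unfolding eventually_at_left_field using t by (intro exI[of _ t]) (auto intro: mono)
      have "F t \<le> 0" using tendsto_le[OF trivial_limit_at_left_real FL tendsto_const evm] .
      then have "EE t \<le> 0" unfolding F_def by (simp add: mult_le_0_iff)
      then have "(w0 t)^2 \<le> 0" unfolding EE_def by (smt (verit) zero_le_power2)
      then show ?thesis by simp
    qed
    have "w0 0 = 0"
    proof -
      have "(w0 \<longlongrightarrow> 0) (at_right 0)"
        by (rule Lim_transform_eventually[OF tendsto_const]) (use ev01R w0z in \<open>auto elim: eventually_mono\<close>)
      from tendsto_unique[OF _ ctsR[OF hw0] this] show ?thesis by simp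
    qed
    then have "w0 r0 = 0" using r0 w01 w0z by (cases "r0 = 0"; cases "r0 = 1") auto
    then show False using r0 by simp
  qed
  have "linearized_solution n lam p u om"
    unfolding linearized_solution_def
  proof (rule exI[of _ dom], intro conjI ballI)
    show "(om has_real_derivative dom r) (at r within {0..1})" if "r \<in> {0..1}" for r
      using om_der that by auto
    show "\<exists>d2w. (dom has_real_derivative d2w) (at r) \<and>
               d2w + (real n - 1) / r * dom r + lam * p / (1 - u r) powr (p + 1) * om r = 0"
      if "r \<in> {0<..<1}" for r
      using dom_der[OF that] ode_om[OF that] unfolding q_def by auto
  qed (use dom0 om1 in auto)
  then show ?thesis unfolding om_def a_def by simp
qed

end
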